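(* Let $P$ and $Q$ be probability distributions (with densities, $P$ absolutely continuous with respect to $Q$), let $\epsilon \ge 0$, $\delta > 0$ and $\tau > 1$. Let $Y_1, \dots, Y_s$ be i.i.d. samples from the privacy loss distribution of $(P,Q)$, i.e. each $Y_k = \log\frac{P(X_k)}{Q(X_k)}$ with $X_k \sim P$ drawn independently, and let $$\hat{\delta} = \frac{1}{s}\sum_{k=1}^s \max\{1 - e^{\epsilon - Y_k}, 0\}.$$ If $H_{e^\epsilon}(P,Q) \ge \tau\delta$, then $$\Pr[\hat{\delta} < \delta] \le \exp\left(-\frac{s(\tau-1)^2\delta}{8\tau/3 - 2/3}\right).$$
   Context: For distributions $P, Q$ and $\alpha \ge 0$, the $\alpha$-hockey-stick divergence is $H_\alpha(P,Q) = \int_x \max\{P(x) - \alpha Q(x), 0\}\,dx$. It satisfies $H_\alpha(P,Q) = \mathbb{E}_Y[\max\{1-\alpha e^{-Y},0\}]$ where $Y$ follows the privacy loss distribution of $(P,Q)$, so $\hat\delta$ is a Monte Carlo estimate of $H_{e^\epsilon}(P,Q)$. *)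

theory Defs
  imports "HOL-Probability.Probability"
begin

text \<open>Distributions P and Q are given by densities p, q with respect to a base measure mu.\<close>

definition hockey_stick :: "'a measure \<Rightarrow> ('a \<Rightarrow> real) \<Rightarrow> ('a \<Rightarrow> real) \<Rightarrow> real \<Rightarrow> real" where
  "hockey_stick mu p q alpha = (\<integral>x. max (p x - alpha * q x) 0 \<partial>mu)"

definition privacy_loss :: "('a \<Rightarrow> real) \<Rightarrow> ('a \<Rightarrow> real) \<Rightarrow> 'a \<Rightarrow> real" where
  "privacy_loss p q x = ln (p x / q x)"

definition delta_hat :: "nat \<Rightarrow> real \<Rightarrow> ('a \<Rightarrow> real) \<Rightarrow> ('a \<Rightarrow> real) \<Rightarrow> (nat \<Rightarrow> 'a) \<Rightarrow> real" where
  "delta_hat s eps p q X =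
     (1 / real s) * (\<Sum>k<s. max (1 - exp (eps - privacy_loss p q (X k))) 0)"

end

theory Submission imports Defs begin

lemma exp_neg_quad:
  fixes t :: real assumes t: "0 \<le> t" shows "exp (-t) \<le> 1 - t + t^2/2"
proof -
  have h: "1 + t + t^2/2 \<le> exp t" by (rule exp_lower_Taylor_quadratic[OF t])
  have e: "1 - t + t^2/2 = ((t-1)^2 + 1)/2" by (simp add: power2_eq_square field_simps)
  have pos: "0 < 1 - t + t^2/2" unfolding e by (simp add: add_nonneg_pos)
  have "(1 + t + t^2/2) * (1 - t + t^2/2) = 1 + t^4/4" by (simp add: algebra_simps power2_eq_square power4_eq_xxxx)
  hence "1 \<le> (1 + t + t^2/2) * (1 - t + t^2/2)" by simp
  also have "\<dots> \<le> exp t * (1 - t + t^2/2)" using h pos by (intro mult_right_mono) auto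
  finally have "1 \<le> exp t * (1 - t + t^2/2)" .
  thus ?thesis by (simp add: exp_minus field_simps)
qed

lemma Z_bound:
  fixes lam z :: real assumes "0 \<le> lam" "lam \<le> 1" "0 \<le> z" "z \<le> 1"
  shows "exp (- (lam * z)) \<le> 1 - (lam - lam^2/2) * z"
proof -
  have "exp (- (lam * z)) \<le> 1 - lam*z + (lam*z)^2/2" using assms by (intro exp_neg_quad) simp
  also have "(lam*z)^2 \<le> lam^2 * z"
  proof -
    have "z^2 \<le> z" using assms by (simp add: power2_eq_square mult_right_le_one_le)
    hence "lam^2 * z^2 \<le> lam^2 * z" by (intro mult_left_mono) auto
    thus ?thesis by (simp add: power_mult_distrib)
  qed
  finally show ?thesis by (simp add: algebra_simps)
qed

theorem theorem2:
  fixes mu :: "'a measure" and p q :: "'a \<Rightarrow> real"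
    and eps delta tau :: real and s :: nat
  assumes p_meas: "p \<in> borel_measurable mu" and q_meas: "q \<in> borel_measurable mu"
    and p_nonneg: "\<And>x. x \<in> space mu \<Longrightarrow> p x \<ge> 0"
    and q_nonneg: "\<And>x. x \<in> space mu \<Longrightarrow> q x \<ge> 0"
    and P_prob: "prob_space (density mu (\<lambda>x. ennreal (p x)))"
    and Q_prob: "prob_space (density mu (\<lambda>x. ennreal (q x)))"
    and P_ll_Q: "absolutely_continuous (density mu (\<lambda>x. ennreal (q x)))
                                        (density mu (\<lambda>x. ennreal (p x)))"
    and eps: "eps \<ge> 0" and delta: "delta > 0" and tau: "tau > 1"
    and H: "hockey_stick mu p q (exp eps) \<ge> tau * delta"
  shows "measure (PiM {..<s} (\<lambda>_. density mu (\<lambda>x. ennreal (p x))))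
           {X \<in> space (PiM {..<s} (\<lambda>_. density mu (\<lambda>x. ennreal (p x)))).
              delta_hat s eps p q X < delta}
         \<le> exp (- (real s * (tau - 1)^2 * delta) / (8 * tau / 3 - 2 / 3))"
proof -
  define M where "M = density mu (\<lambda>x. ennreal (p x))"
  define Z where "Z x = max (1 - exp (eps - privacy_loss p q x)) 0" for x
  define PM where "PM = PiM {..<s} (\<lambda>_. M)"
  interpret P: prob_space M using P_prob M_def by simp
  interpret PP: product_prob_space "\<lambda>_. M" "{..<s}"
    by (simp add: product_prob_space_def product_prob_space_axioms_def product_sigma_finite_def
        P.prob_space_axioms P.sigma_finite_measure_axioms)
  interpret PiP: prob_space PM unfolding PM_def by (rule prob_space_PiM) (rule P.prob_space_axioms)
  have Zmeas_mu: "Z \<in> borel_measurable mu" unfolding Z_def privacy_loss_def using p_meas q_meas by measurable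
  hence Zmeas[measurable]: "Z \<in> borel_measurable M" unfolding M_def by simp
  have Z0: "0 \<le> Z x" and Z1: "Z x \<le> 1" for x unfolding Z_def by auto
  have AEq: "AE x in mu. 0 < p x \<longrightarrow> q x \<noteq> 0"
  proof -
    have "AE x in density mu (\<lambda>x. ennreal (q x)). q x \<noteq> 0"
      using q_meas by (subst AE_density) auto
    hence "AE x in density mu (\<lambda>x. ennreal (p x)). q x \<noteq> 0"
      by (intro absolutely_continuous_AE[OF _ P_ll_Q]) auto
    thus ?thesis using p_meas by (subst (asm) AE_density) auto
  qed
  have EZ: "P.expectation Z = hockey_stick mu p q (exp eps)"
  proof -
    have "P.expectation Z = (\<integral>x. p x *\<^sub>R Z x \<partial>mu)"
      unfolding M_def using Zmeas_mu p_meas p_nonneg by (intro integral_density) auto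
    also have "\<dots> = (\<integral>x. max (p x - exp eps * q x) 0 \<partial>mu)"
    proof (rule integral_cong_AE)
      show "AE x in mu. p x *\<^sub>R Z x = max (p x - exp eps * q x) 0"
        using AEq AE_space
      proof eventually_elim
        case (elim x)
        have px: "0 \<le> p x" and qx: "0 \<le> q x" using elim p_nonneg q_nonneg by auto
        show ?case
        proof (cases "p x = 0")
          case True
          then show ?thesis using qx by simp
        next
          case False
          hence pp: "0 < p x" using px by simp
          hence qp: "0 < q x" using elim qx by force
          have "exp (eps - privacy_loss p q x) = exp eps * q x / p x"
            unfolding privacy_loss_def using pp qp by (simp add: exp_diff)
          hence "Z x = max (1 - exp eps * q x / p x) 0" unfolding Z_def by simp
          also have "p x * \<dots> = max (p x - exp eps * q x) 0" using pp
            by (simp add: max_def field_simps)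
          finally show ?thesis by simp
        qed
      qed
    qed (use Zmeas_mu p_meas q_meas in auto)
    finally show ?thesis unfolding hockey_stick_def .
  qed
  define lam where "lam = (tau - 1) / tau"
  define a where "a = lam - lam^2/2"
  define c where "c = exp (lam * delta)"
  define A where "A = {X \<in> space PM. delta_hat s eps p q X < delta}"
  have lam0: "0 < lam" and lam1: "lam < 1" using tau unfolding lam_def by (auto simp: field_simps)
  have "lam * lam < lam * 2" using lam0 lam1 by simp
  hence a0: "0 < a" unfolding a_def by (simp add: power2_eq_square)
  have a1: "a \<le> 1" unfolding a_def using lam1 zero_le_power2[of lam] by linarith
  have intZ: "integrable M Z"
    by (rule P.integrable_const_bound[where B=1]) (use Z0 Z1 in auto)
  have EZ1: "P.expectation Z \<le> 1" by (rule P.integral_le_const[OF intZ]) (use Z1 in simp)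
  have EZ0: "tau * delta \<le> P.expectation Z" using EZ H by simp
  have int1: "integrable M (\<lambda>x. 1 - a * Z x)"
    using intZ by simp
  have aE: "0 \<le> 1 - a * P.expectation Z" using a0 a1 EZ1 EZ0 tau delta
    by (metis diff_ge_0_iff_ge mult_le_one less_imp_le order.trans mult_nonneg_nonneg integral_nonneg Z0)
  have aZ: "a * Z x \<le> 1" for x using Z0[of x] Z1[of x] a0 a1 by (simp add: mult_le_one)
  have onefactor: "(\<integral>\<^sup>+x. ennreal (exp (- (lam * Z x))) \<partial>M) \<le> ennreal (1 - a * P.expectation Z)"
  proof -
    have "(\<integral>\<^sup>+x. ennreal (exp (- (lam * Z x))) \<partial>M) \<le> (\<integral>\<^sup>+x. ennreal (1 - a * Z x) \<partial>M)"
      using Z_bound[of lam] lam0 lam1 Z0 Z1 unfolding a_def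
      by (intro nn_integral_mono ennreal_leI) auto
    also have "\<dots> = ennreal (\<integral>x. 1 - a * Z x \<partial>M)"
      using int1 aZ by (intro nn_integral_eq_integral) auto
    also have "(\<integral>x. 1 - a * Z x \<partial>M) = 1 - a * P.expectation Z"
      using int1 intZ by (subst Bochner_Integration.integral_diff) (auto simp: P.prob_space)
    finally show ?thesis .
  qed
  have dh: "delta_hat s eps p q X = (1 / real s) * (\<Sum>k<s. Z (X k))" for X
    by (simp add: delta_hat_def Z_def)
  have Ameas: "A \<in> sets PM" unfolding A_def dh PM_def by measurable
  have prodeq: "ennreal (c ^ s) * (\<Prod>k\<in>{..<s}. ennreal (exp (- (lam * Z (X k)))))
      = ennreal (exp (lam * (real s * delta - (\<Sum>k<s. Z (X k)))))" for X
  proof -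
    have "ennreal (c ^ s) * (\<Prod>k\<in>{..<s}. ennreal (exp (- (lam * Z (X k)))))
        = ennreal (c ^ s * (\<Prod>k\<in>{..<s}. exp (- (lam * Z (X k)))))"
      by (simp add: prod_ennreal ennreal_mult' c_def)
    also have "c ^ s * (\<Prod>k\<in>{..<s}. exp (- (lam * Z (X k)))) = exp (lam * (real s * delta - (\<Sum>k<s. Z (X k))))"
      unfolding c_def by (simp add: exp_sum[symmetric] exp_of_nat_mult[symmetric] exp_add[symmetric]
         right_diff_distrib sum_distrib_left sum_negf)
    finally show ?thesis .
  qed
  have ind: "indicator A X \<le> ennreal (c ^ s) * (\<Prod>k\<in>{..<s}. ennreal (exp (- (lam * Z (X k)))))"
    for X
  proof (cases "X \<in> A")
    case True
    hence "(1 / real s) * (\<Sum>k<s. Z (X k)) < delta" unfolding A_def dh by simp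
    hence "(\<Sum>k<s. Z (X k)) \<le> real s * delta"
      using delta by (cases "s = 0") (auto simp: field_simps)
    hence "1 \<le> exp (lam * (real s * delta - (\<Sum>k<s. Z (X k))))"
      using lam0 by simp
    thus ?thesis unfolding prodeq using True by simp
  qed simp
  have "emeasure PM A = (\<integral>\<^sup>+X. indicator A X \<partial>PM)" using Ameas by simp
  also have "\<dots> \<le> (\<integral>\<^sup>+X. ennreal (c ^ s) * (\<Prod>k\<in>{..<s}. ennreal (exp (- (lam * Z (X k))))) \<partial>PM)"
    using ind by (intro nn_integral_mono) auto
  also have "\<dots> = ennreal (c ^ s) * (\<Prod>k\<in>{..<s}. (\<integral>\<^sup>+x. ennreal (exp (- (lam * Z x))) \<partial>M))"
  proof -
    have "(\<integral>\<^sup>+X. (\<Prod>k\<in>{..<s}. ennreal (exp (- (lam * Z (X k))))) \<partial>PM)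
       = (\<Prod>k\<in>{..<s}. (\<integral>\<^sup>+x. ennreal (exp (- (lam * Z x))) \<partial>M))"
      unfolding PM_def by (rule PP.product_nn_integral_prod) auto
    moreover have "(\<lambda>X. (\<Prod>k\<in>{..<s}. ennreal (exp (- (lam * Z (X k)))))) \<in> borel_measurable PM"
      unfolding PM_def by measurable
    ultimately show ?thesis by (simp add: nn_integral_cmult)
  qed
  also have "\<dots> \<le> ennreal (c ^ s) * (\<Prod>k\<in>{..<s}. ennreal (1 - a * P.expectation Z))"
  proof -
    have "(\<integral>\<^sup>+x. ennreal (exp (- (lam * Z x))) \<partial>M) ^ s \<le> ennreal (1 - a * P.expectation Z) ^ s"
      by (rule power_mono[OF onefactor]) simp
    thus ?thesis by (simp add: mult_left_mono)
  qed
  also have "\<dots> = ennreal (c ^ s * (1 - a * P.expectation Z) ^ s)"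
    using aE by (simp add: ennreal_mult' ennreal_power c_def)
  finally have "measure PM A \<le> c ^ s * (1 - a * P.expectation Z) ^ s"
    using aE by (simp add: PiP.emeasure_eq_measure c_def)
  also have "\<dots> \<le> c ^ s * exp (- (a * tau * delta)) ^ s"
  proof -
    have "1 - a * P.expectation Z \<le> 1 - a * (tau * delta)"
      using EZ0 a0 by (simp add: mult_left_mono)
    also have "\<dots> \<le> exp (- (a * tau * delta))"
      using exp_ge_add_one_self[of "- (a * tau * delta)"] by simp
    finally have "(1 - a * P.expectation Z) ^ s \<le> exp (- (a * tau * delta)) ^ s"
      using aE by (intro power_mono) auto
    thus ?thesis unfolding c_def by (intro mult_left_mono) auto
  qed
  also have "\<dots> = exp (- (real s * (tau - 1)^2 * delta) / (2 * tau))"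
  proof -
    have key: "lam * delta - a * tau * delta = - ((tau - 1)^2 * delta) / (2 * tau)"
      unfolding a_def lam_def using tau by (simp add: field_simps power2_eq_square)
    have "c ^ s * exp (- (a * tau * delta)) ^ s = exp (lam * delta - a * tau * delta) ^ s"
      unfolding c_def by (simp add: power_mult_distrib[symmetric] exp_diff exp_minus field_simps)
    also have "\<dots> = exp (real s * (lam * delta - a * tau * delta))"
      by (simp add: exp_of_nat_mult)
    also have "real s * (lam * delta - a * tau * delta) = - (real s * (tau - 1)^2 * delta) / (2 * tau)"
      unfolding key by simp
    finally show ?thesis .
  qed
  also have "\<dots> \<le> exp (- (real s * (tau - 1)^2 * delta) / (8 * tau / 3 - 2 / 3))"
  proof -
    have "(real s * (tau - 1)^2 * delta) / (8 * tau / 3 - 2 / 3) \<le> (real s * (tau - 1)^2 * delta) / (2 * tau)"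
      using tau delta by (intro divide_left_mono) auto
    thus ?thesis by simp
  qed
  finally show ?thesis unfolding PM_def A_def M_def .
qed

end
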